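(* Let $T:\mathcal{M}_d\to\mathcal{M}_d$ be a doubly stochastic, primitive quantum channel. Then the function $k\mapsto\alpha_2((T^* )^kT^k-\text{id}_d)$, $k\in\mathbb{N}$, is monotone increasing (non-decreasing).
   Context: Doubly stochastic channel: completely positive, trace preserving, $T(\mathbb{1})=T^*(\mathbb{1})=\mathbb{1}$ ($T^*$ the Hilbert–Schmidt adjoint). Primitive: $T^k(\rho)\to\mathbb{1}_d/d$ for all states. For a Liouvillian $\mathcal{L}$ on $\mathcal{M}_d$ with $\mathcal{L}(\mathbb{1})=0$: $\alpha_2(\mathcal{L})=\inf_{X>0}\mathcal{E}^2_{\mathcal{L}}(X)/\text{Ent}_2(X)$ over positive definite $X$, with $\mathcal{E}^2_{\mathcal{L}}(X)=-\frac1d\text{tr}[\mathcal{L}(X)X]$ and $\text{Ent}_2(X)=\frac1{2d}\text{tr}[X^2(\log\frac{X^2}{\text{tr}(X^2)}+\log d)]$. *)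

theory Defs
  imports Complex_Main "Jordan_Normal_Form.Matrix"
begin

text \<open>Matrices in M_d are complex d x d matrices (carrier_mat d d).\<close>

definition mtrace :: "complex mat \<Rightarrow> complex" where
  "mtrace A = (\<Sum>i<dim_row A. A $$ (i,i))"

definition madj :: "complex mat \<Rightarrow> complex mat" where
  "madj A = Matrix.mat (dim_col A) (dim_row A) (\<lambda>(i,j). cnj (A $$ (j,i)))"

definition qform :: "nat \<Rightarrow> complex mat \<Rightarrow> complex vec \<Rightarrow> complex" where
  "qform d A v = (\<Sum>i<d. \<Sum>j<d. cnj (v $ i) * A $$ (i,j) * v $ j)"

definition psd :: "nat \<Rightarrow> complex mat \<Rightarrow> bool" where
  "psd d A \<longleftrightarrow> A \<in> carrier_mat d d \<and>
     (\<forall>v \<in> carrier_vec d. Im (qform d A v) = 0 \<and> Re (qform d A v) \<ge> 0)"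

definition pd :: "nat \<Rightarrow> complex mat \<Rightarrow> bool" where
  "pd d A \<longleftrightarrow> A \<in> carrier_mat d d \<and>
     (\<forall>v \<in> carrier_vec d. Im (qform d A v) = 0 \<and>
        (v \<noteq> 0\<^sub>v d \<longrightarrow> Re (qform d A v) > 0))"

definition unitary_mat :: "nat \<Rightarrow> complex mat \<Rightarrow> bool" where
  "unitary_mat d U \<longleftrightarrow> U \<in> carrier_mat d d \<and> U * madj U = 1\<^sub>m d \<and> madj U * U = 1\<^sub>m d"

text \<open>Functional calculus for Hermitian matrices via the spectral decomposition
  A = U diag(lam) U^*, f(A) = U diag(f(lam)) U^* (well defined for Hermitian A).\<close>
definition mat_fun :: "nat \<Rightarrow> (real \<Rightarrow> real) \<Rightarrow> complex mat \<Rightarrow> complex mat" where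
  "mat_fun d f A = (SOME B. \<exists>U (lam :: nat \<Rightarrow> real). unitary_mat d U \<and>
      A = U * mat_diag d (\<lambda>i. complex_of_real (lam i)) * madj U \<and>
      B = U * mat_diag d (\<lambda>i. complex_of_real (f (lam i))) * madj U)"

definition mat_log :: "nat \<Rightarrow> complex mat \<Rightarrow> complex mat" where
  "mat_log d A = mat_fun d ln A"

definition lin_map :: "nat \<Rightarrow> (complex mat \<Rightarrow> complex mat) \<Rightarrow> bool" where
  "lin_map d T \<longleftrightarrow> (\<forall>A \<in> carrier_mat d d. T A \<in> carrier_mat d d) \<and>
     (\<forall>A \<in> carrier_mat d d. \<forall>B \<in> carrier_mat d d. T (A + B) = T A + T B) \<and>
     (\<forall>A \<in> carrier_mat d d. \<forall>c. T (c \<cdot>\<^sub>m A) = c \<cdot>\<^sub>m T A)"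

text \<open>Ampliation T \<otimes> id_k acting on (k*d) x (k*d) matrices viewed as k x k block matrices
  with d x d blocks.\<close>
definition ampl :: "nat \<Rightarrow> nat \<Rightarrow> (complex mat \<Rightarrow> complex mat) \<Rightarrow> complex mat \<Rightarrow> complex mat" where
  "ampl d k T M = Matrix.mat (k*d) (k*d) (\<lambda>(p,q).
     T (Matrix.mat d d (\<lambda>(i,j). M $$ ((p div d) * d + i, (q div d) * d + j))) $$ (p mod d, q mod d))"

definition completely_positive :: "nat \<Rightarrow> (complex mat \<Rightarrow> complex mat) \<Rightarrow> bool" where
  "completely_positive d T \<longleftrightarrow> (\<forall>k M. psd (k*d) M \<longrightarrow> psd (k*d) (ampl d k T M))"

definition trace_preserving :: "nat \<Rightarrow> (complex mat \<Rightarrow> complex mat) \<Rightarrow> bool" where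
  "trace_preserving d T \<longleftrightarrow> (\<forall>A \<in> carrier_mat d d. mtrace (T A) = mtrace A)"

definition quantum_channel :: "nat \<Rightarrow> (complex mat \<Rightarrow> complex mat) \<Rightarrow> bool" where
  "quantum_channel d T \<longleftrightarrow> lin_map d T \<and> completely_positive d T \<and> trace_preserving d T"

definition hs_adjoint :: "nat \<Rightarrow> (complex mat \<Rightarrow> complex mat) \<Rightarrow> (complex mat \<Rightarrow> complex mat) \<Rightarrow> bool" where
  "hs_adjoint d T Ts \<longleftrightarrow> lin_map d Ts \<and>
     (\<forall>A \<in> carrier_mat d d. \<forall>B \<in> carrier_mat d d. mtrace (madj (Ts A) * B) = mtrace (madj A * T B))"

definition doubly_stochastic :: "nat \<Rightarrow> (complex mat \<Rightarrow> complex mat) \<Rightarrow> (complex mat \<Rightarrow> complex mat) \<Rightarrow> bool" where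
  "doubly_stochastic d T Ts \<longleftrightarrow> quantum_channel d T \<and> hs_adjoint d T Ts \<and>
     T (1\<^sub>m d) = 1\<^sub>m d \<and> Ts (1\<^sub>m d) = 1\<^sub>m d"

definition is_state :: "nat \<Rightarrow> complex mat \<Rightarrow> bool" where
  "is_state d \<rho> \<longleftrightarrow> psd d \<rho> \<and> mtrace \<rho> = 1"

definition primitive :: "nat \<Rightarrow> (complex mat \<Rightarrow> complex mat) \<Rightarrow> bool" where
  "primitive d T \<longleftrightarrow> (\<forall>\<rho>. is_state d \<rho> \<longrightarrow> (\<forall>i<d. \<forall>j<d.
      (\<lambda>k. (T ^^ k) \<rho> $$ (i,j)) \<longlonglongrightarrow> (if i = j then 1 / of_nat d else 0)))"

definition dirichlet2 :: "nat \<Rightarrow> (complex mat \<Rightarrow> complex mat) \<Rightarrow> complex mat \<Rightarrow> real" where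
  "dirichlet2 d L X = - (1 / real d) * Re (mtrace (L X * X))"

definition ent2 :: "nat \<Rightarrow> complex mat \<Rightarrow> real" where
  "ent2 d X = (1 / (2 * real d)) * Re (mtrace (X * X *
      (mat_log d ((1 / mtrace (X * X)) \<cdot>\<^sub>m (X * X)) + complex_of_real (ln (real d)) \<cdot>\<^sub>m 1\<^sub>m d)))"

text \<open>Log-Sobolev-2 constant; the infimum ranges over positive definite X with nonzero entropy
  (Ent_2(X) = 0 exactly for X proportional to the identity, where the quotient is undefined).\<close>
definition alpha2 :: "nat \<Rightarrow> (complex mat \<Rightarrow> complex mat) \<Rightarrow> real" where
  "alpha2 d L = Inf {dirichlet2 d L X / ent2 d X | X. pd d X \<and> ent2 d X \<noteq> 0}"

end

theory Submission
  imports Defs "Jordan_Normal_Form.Schur_Decomposition" "Jordan_Normal_Form.Spectral_Radius"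
begin

lemma madj_dims[simp]: "dim_row (madj A) = dim_col A" "dim_col (madj A) = dim_row A"
  by (auto simp: madj_def)

lemma madj_carrier[simp]: "A \<in> carrier_mat n m \<Longrightarrow> madj A \<in> carrier_mat m n"
  by (auto simp: madj_def)

lemma madj_index[simp]: "i < dim_col A \<Longrightarrow> j < dim_row A \<Longrightarrow> madj A $$ (i,j) = cnj (A $$ (j,i))"
  by (auto simp: madj_def)

lemma madj_madj[simp]: "madj (madj A) = A"
  by (rule eq_matI, auto)

lemma madj_mult: assumes "A \<in> carrier_mat n m" "B \<in> carrier_mat m p"
  shows "madj (A * B) = madj B * madj A"
  using assms by (intro eq_matI, auto simp: scalar_prod_def cnj_sum intro!: sum.cong)

lemma madj_one[simp]: "madj (1\<^sub>m n) = 1\<^sub>m n"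
  by (rule eq_matI, auto)

lemma madj_diag_real: "madj (mat_diag n (\<lambda>i. complex_of_real (f i))) = mat_diag n (\<lambda>i. complex_of_real (f i))"
  by (rule eq_matI, auto simp: mat_diag_def)

lemma madj_add: assumes "A \<in> carrier_mat n m" "B \<in> carrier_mat n m"
  shows "madj (A + B) = madj A + madj B"
  using assms by (intro eq_matI, auto)

lemma mtrace_mult_comm: assumes "A \<in> carrier_mat n m" "B \<in> carrier_mat m n"
  shows "mtrace (A * B) = mtrace (B * A)"
proof -
  have "mtrace (A * B) = (\<Sum>i<n. \<Sum>k<m. A $$ (i,k) * B $$ (k,i))"
    using assms by (auto simp: mtrace_def scalar_prod_def atLeast0LessThan intro!: sum.cong)
  also have "\<dots> = (\<Sum>k<m. \<Sum>i<n. B $$ (k,i) * A $$ (i,k))"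
    by (subst sum.swap) (simp add: mult.commute)
  also have "\<dots> = mtrace (B * A)"
    using assms by (auto simp: mtrace_def scalar_prod_def atLeast0LessThan intro!: sum.cong)
  finally show ?thesis .
qed

lemma mtrace_madj: "mtrace (madj A) = cnj (mtrace A)" if "A \<in> carrier_mat n n"
  using that by (auto simp: mtrace_def cnj_sum)

lemma mtrace_add: assumes "A \<in> carrier_mat n n" "B \<in> carrier_mat n n"
  shows "mtrace (A + B) = mtrace A + mtrace B"
  using assms by (auto simp: mtrace_def sum.distrib)

lemma mtrace_minus: assumes "A \<in> carrier_mat n n" "B \<in> carrier_mat n n"
  shows "mtrace (A - B) = mtrace A - mtrace B"
  using assms by (auto simp: mtrace_def sum_subtractf)

lemma mtrace_smult: assumes "A \<in> carrier_mat n n"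
  shows "mtrace (c \<cdot>\<^sub>m A) = c * mtrace A"
  using assms by (auto simp: mtrace_def sum_distrib_left)

lemma mtrace_one[simp]: "mtrace (1\<^sub>m n) = of_nat n"
  by (simp add: mtrace_def)

lemma mtrace_diag: "mtrace (mat_diag n f) = (\<Sum>i<n. f i)"
  by (simp add: mtrace_def mat_diag_def)

lemma mtrace_madj_mult_self: assumes "A \<in> carrier_mat n m"
  shows "mtrace (madj A * A) = complex_of_real (\<Sum>j<m. \<Sum>k<n. (cmod (A $$ (k,j)))\<^sup>2)"
proof -
  have "mtrace (madj A * A) = (\<Sum>j<m. \<Sum>k<n. cnj (A $$ (k,j)) * A $$ (k,j))"
    using assms by (auto simp: mtrace_def scalar_prod_def atLeast0LessThan intro!: sum.cong)
  also have "\<dots> = (\<Sum>j<m. \<Sum>k<n. complex_of_real ((cmod (A $$ (k,j)))\<^sup>2))"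
    by (intro sum.cong refl) (metis complex_norm_square mult.commute)
  finally show ?thesis by simp
qed

lemma sum_two_support:
  assumes "p < n" "q < n" "p \<noteq> q" "\<And>j. j < (n::nat) \<Longrightarrow> j \<noteq> p \<Longrightarrow> j \<noteq> q \<Longrightarrow> g j = 0"
  shows "(\<Sum>j<n. g j) = g p + (g q :: 'a :: comm_monoid_add)"
proof -
  have "(\<Sum>j<n. g j) = (\<Sum>j\<in>{p,q}. g j)"
    using assms by (intro sum.mono_neutral_right) auto
  then show ?thesis using assms by simp
qed
lemma qform_two:
  assumes "p < n" "q < n" "p \<noteq> q"
  shows "qform n A (vec n (\<lambda>i. if i = p then a else if i = q then b else 0)) =
    cnj a * A $$ (p,p) * a + cnj a * A $$ (p,q) * b + cnj b * A $$ (q,p) * a + cnj b * A $$ (q,q) * b"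
proof -
  let ?v = "vec n (\<lambda>i. if i = p then a else if i = q then b else 0)"
  have inner: "(\<Sum>j<n. cnj (?v $ i) * A $$ (i,j) * ?v $ j) = cnj (?v $ i) * A $$ (i,p) * a + cnj (?v $ i) * A $$ (i,q) * b" for i
    by (subst sum_two_support[OF assms]) (use assms in auto)
  have "qform n A ?v = (\<Sum>i<n. cnj (?v $ i) * A $$ (i,p) * a + cnj (?v $ i) * A $$ (i,q) * b)"
    unfolding qform_def inner ..
  also have "\<dots> = cnj a * A $$ (p,p) * a + cnj a * A $$ (p,q) * b + (cnj b * A $$ (q,p) * a + cnj b * A $$ (q,q) * b)"
    by (subst sum_two_support[OF assms]) (use assms in auto)
  finally show ?thesis by (simp add: add.assoc)
qed

lemma qform_one:
  assumes "p < n"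
  shows "qform n A (vec n (\<lambda>i. if i = p then 1 else 0)) = A $$ (p,p)"
proof -
  have "qform n A (vec n (\<lambda>i. if i = p then 1 else 0)) =
     (\<Sum>i<n. \<Sum>j<n. (if i = p then 1 else 0) * A $$ (i,j) * (if j = p then 1 else 0))"
    unfolding qform_def by (intro sum.cong refl) auto
  also have "\<dots> = A $$ (p,p)" using assms
    by (simp add: if_distrib[of "\<lambda>x. x * _"] if_distrib[of "\<lambda>x. _ * x"] sum.delta cong: if_cong)
  finally show ?thesis .
qed

lemma real_qform_herm:
  assumes re: "\<And>v. v \<in> carrier_vec n \<Longrightarrow> Im (qform n A v) = 0"
    and ij: "i < n" "j < n"
  shows "A $$ (j,i) = cnj (A $$ (i,j))"
proof (cases "i = j")
  case True
  have "Im (A $$ (i,i)) = 0" using re[of "vec n (\<lambda>k. if k = i then 1 else 0)"] qform_one[OF ij(1), of A] by simp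
  then show ?thesis using True by (simp add: complex_eq_iff)
next
  case False
  have d: "Im (A $$ (k,k)) = 0" if "k < n" for k
    using re[of "vec n (\<lambda>l. if l = k then 1 else 0)"] qform_one[OF that, of A] by simp
  have 1: "Im (A $$ (i,j) + A $$ (j,i)) = 0"
    using re[of "vec n (\<lambda>k. if k = i then 1 else if k = j then 1 else 0)"] qform_two[OF ij False, of A 1 1] d[OF ij(1)] d[OF ij(2)]
    by simp
  have 2: "Re (A $$ (i,j)) = Re (A $$ (j,i))"
    using re[of "vec n (\<lambda>k. if k = i then 1 else if k = j then \<i> else 0)"] qform_two[OF ij False, of A 1 \<i>] d[OF ij(1)] d[OF ij(2)]
    by simp
  show ?thesis using 1 2 by (simp add: complex_eq_iff)
qed

lemma pd_herm: "pd n A \<Longrightarrow> i < n \<Longrightarrow> j < n \<Longrightarrow> A $$ (j,i) = cnj (A $$ (i,j))"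
  using real_qform_herm[of n A i j] unfolding pd_def by blast

lemma psd_herm: "psd n A \<Longrightarrow> i < n \<Longrightarrow> j < n \<Longrightarrow> A $$ (j,i) = cnj (A $$ (i,j))"
  using real_qform_herm[of n A i j] unfolding psd_def by blast

lemma herm_madj: assumes "A \<in> carrier_mat n n" "\<And>i j. i < n \<Longrightarrow> j < n \<Longrightarrow> A $$ (j,i) = cnj (A $$ (i,j))"
  shows "madj A = A"
proof (rule eq_matI)
  fix i j assume ij: "i < dim_row A" "j < dim_col A"
  then have "madj A $$ (i,j) = cnj (A $$ (j,i))" using assms(1) by simp
  also have "\<dots> = A $$ (i,j)" using assms(2)[of j i] ij assms(1) by (metis carrier_matD complex_cnj_cnj)
  finally show "madj A $$ (i,j) = A $$ (i,j)" .
qed (use assms in auto)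

lemma swap3: "(\<Sum>p<n. \<Sum>q<n. \<Sum>r<m. F p q r) = (\<Sum>r<m. \<Sum>p<n. \<Sum>(q::nat)<n. F p q r)"
proof -
  have "(\<Sum>p<n. \<Sum>q<n. \<Sum>r<m. F p q r) = (\<Sum>p<n. \<Sum>r<m. \<Sum>q<n. F p q r)"
    by (rule sum.cong[OF refl], rule sum.swap)
  also have "\<dots> = (\<Sum>r<m. \<Sum>p<n. \<Sum>q<n. F p q r)" by (rule sum.swap)
  finally show ?thesis .
qed

lemma qform_gram:
  "qform n (Matrix.mat n n (\<lambda>(p,q). \<Sum>r<m. cnj (W $$ (r,p)) * W $$ (r,q))) v =
    complex_of_real (\<Sum>r<m. (cmod (\<Sum>q<n. W $$ (r,q) * v $ q))\<^sup>2)"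
proof -
  have "qform n (Matrix.mat n n (\<lambda>(p,q). \<Sum>r<m. cnj (W $$ (r,p)) * W $$ (r,q))) v =
     (\<Sum>p<n. \<Sum>q<n. \<Sum>r<m. cnj (W $$ (r,p) * v $ p) * (W $$ (r,q) * v $ q))"
    unfolding qform_def by (intro sum.cong refl) (simp add: sum_distrib_left sum_distrib_right, simp add: mult_ac)
  also have "\<dots> = (\<Sum>r<m. cnj (\<Sum>p<n. W $$ (r,p) * v $ p) * (\<Sum>q<n. W $$ (r,q) * v $ q))"
    by (subst swap3) (simp only: cnj_sum sum_product)
  also have "\<dots> = (\<Sum>r<m. complex_of_real ((cmod (\<Sum>q<n. W $$ (r,q) * v $ q))\<^sup>2))"
    by (intro sum.cong refl) (subst complex_norm_square, simp only: mult.commute)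
  finally show ?thesis by (simp only: of_real_sum)
qed

lemma psd_gram: "psd n (Matrix.mat n n (\<lambda>(p,q). \<Sum>r<m. cnj (W $$ (r,p)) * W $$ (r,q)))"
  unfolding psd_def qform_gram by (auto intro: sum_nonneg)

definition vnorm2 :: "nat \<Rightarrow> complex vec \<Rightarrow> real" where
  "vnorm2 n w = (\<Sum>i<n. (cmod (w $ i))\<^sup>2)"

lemma cscalar_self: assumes "w \<in> carrier_vec n"
  shows "w \<bullet>c w = complex_of_real (vnorm2 n w)"
proof -
  have "w \<bullet>c w = (\<Sum>i<n. w $ i * cnj (w $ i))"
    using assms by (auto simp: scalar_prod_def atLeast0LessThan)
  also have "\<dots> = (\<Sum>i<n. complex_of_real ((cmod (w $ i))\<^sup>2))"
    by (intro sum.cong refl) (subst complex_norm_square, simp only:)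
  finally show ?thesis by (simp only: vnorm2_def of_real_sum)
qed

lemma cscalar_index: assumes "v \<in> carrier_vec n" "w \<in> carrier_vec n"
  shows "v \<bullet>c w = (\<Sum>i<n. v $ i * cnj (w $ i))"
  using assms by (auto simp: scalar_prod_def atLeast0LessThan)

lemma vnorm2_nonneg: "vnorm2 n w \<ge> 0"
  unfolding vnorm2_def by (auto intro: sum_nonneg)

lemma unit_unitary:
  assumes u: "u \<in> carrier_vec n" and n: "n > 0" and nu: "vnorm2 n u = 1"
  shows "\<exists>W. unitary_mat n W \<and> (\<forall>i<n. W $$ (i,0) = u $ i)"
proof -
  interpret cof_vec_space n "TYPE(complex)" .
  have u0: "u \<noteq> 0\<^sub>v n"
  proof
    assume "u = 0\<^sub>v n"
    then have "vnorm2 n u = 0" by (simp add: vnorm2_def)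
    with nu show False by simp
  qed
  define b where "b = basis_completion u"
  from basis_completion[OF u u0, folded b_def]
  have dist_b: "distinct b" and indep: "\<not> lin_dep (set b)" and bc: "set b \<subseteq> carrier_vec n"
    and hdb: "hd b = u" and len_b: "length b = n" by auto
  from hdb len_b n obtain vs where bv: "b = u # vs" by (cases b, auto)
  define ws where "ws = gram_schmidt n b"
  from gram_schmidt_result[OF bc dist_b indep refl, folded ws_def]
  have ws: "set ws \<subseteq> carrier_vec n" "corthogonal ws" "length ws = n"
    by (auto simp: len_b)
  from gram_schmidt_hd[OF u, of vs, folded bv] have hdws: "hd ws = u" unfolding ws_def .
  have ws0: "ws ! 0 = u" using hdws ws(3) n by (cases ws) auto
  have wsc: "ws ! j \<in> carrier_vec n" if "j < n" for j using ws that by auto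
  have cpos: "vnorm2 n (ws ! j) > 0" if "j < n" for j
  proof -
    have "ws ! j \<bullet>c ws ! j \<noteq> 0" using corthogonalD[OF ws(2)] that ws(3) by auto
    then have "vnorm2 n (ws ! j) \<noteq> 0" using cscalar_self[OF wsc[OF that]] by auto
    then show ?thesis using vnorm2_nonneg[of n "ws ! j"] by linarith
  qed
  define s where "s j = 1 / sqrt (vnorm2 n (ws ! j))" for j
  define W where "W = Matrix.mat n n (\<lambda>(i,j). complex_of_real (s j) * ws ! j $ i)"
  have W: "W \<in> carrier_mat n n" by (simp add: W_def)
  have "madj W * W = 1\<^sub>m n"
  proof (rule eq_matI)
    fix j k assume jk: "j < dim_row (1\<^sub>m n)" "k < dim_col (1\<^sub>m n)"
    then have j: "j < n" and k: "k < n" by auto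
    have "(madj W * W) $$ (j,k) = (\<Sum>i<n. cnj (complex_of_real (s j) * ws ! j $ i) * (complex_of_real (s k) * ws ! k $ i))"
      using j k W by (simp add: scalar_prod_def atLeast0LessThan W_def)
    also have "\<dots> = complex_of_real (s j * s k) * (\<Sum>i<n. ws ! k $ i * cnj (ws ! j $ i))"
      by (simp add: sum_distrib_left mult_ac)
    also have "(\<Sum>i<n. ws ! k $ i * cnj (ws ! j $ i)) = ws ! k \<bullet>c ws ! j"
      by (rule cscalar_index[OF wsc[OF k] wsc[OF j], symmetric])
    also have "complex_of_real (s j * s k) * (ws ! k \<bullet>c ws ! j) = 1\<^sub>m n $$ (j,k)"
    proof (cases "j = k")
      case True
      have "s k * s k * vnorm2 n (ws ! k) = 1" using cpos[OF k]
        by (simp add: s_def)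
      then show ?thesis using True cscalar_self[OF wsc[OF k]] j k
        by (simp flip: of_real_mult)
    next
      case False
      then have "ws ! k \<bullet>c ws ! j = 0" using corthogonalD[OF ws(2)] j k ws(3) by auto
      then show ?thesis using False j k by simp
    qed
    finally show "(madj W * W) $$ (j,k) = 1\<^sub>m n $$ (j,k)" .
  qed (use W in auto)
  moreover have "W * madj W = 1\<^sub>m n"
    using mat_mult_left_right_inverse[OF madj_carrier[OF W] W] calculation by simp
  moreover have "W $$ (i,0) = u $ i" if "i < n" for i
  proof -
    have "s 0 = 1" using nu ws0 by (simp add: s_def)
    then show ?thesis using that n ws0 by (simp add: W_def)
  qed
  ultimately show ?thesis using W unfolding unitary_mat_def by blast
qed


definition ext :: "nat \<Rightarrow> complex \<Rightarrow> complex mat \<Rightarrow> complex mat" where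
  "ext n c B = Matrix.mat (Suc n) (Suc n) (\<lambda>(i,j). if i = 0 \<and> j = 0 then c else if i = 0 \<or> j = 0 then 0 else B $$ (i - 1, j - 1))"

lemma ext_carrier[simp]: "ext n c B \<in> carrier_mat (Suc n) (Suc n)"
  by (simp add: ext_def)

lemma ext_dims[simp]: "dim_row (ext n c B) = Suc n" "dim_col (ext n c B) = Suc n"
  by (simp_all add: ext_def)

lemma ext_index: "i < Suc n \<Longrightarrow> j < Suc n \<Longrightarrow> ext n c B $$ (i,j) =
  (if i = 0 \<and> j = 0 then c else if i = 0 \<or> j = 0 then 0 else B $$ (i - 1, j - 1))"
  by (simp add: ext_def)

lemma ext_mult: assumes "B \<in> carrier_mat n n" "C \<in> carrier_mat n n"
  shows "ext n a B * ext n b C = ext n (a * b) (B * C)"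
proof (rule eq_matI)
  fix i j assume "i < dim_row (ext n (a * b) (B * C))" "j < dim_col (ext n (a * b) (B * C))"
  then have i: "i < Suc n" and j: "j < Suc n" by auto
  have "(ext n a B * ext n b C) $$ (i,j) = (\<Sum>k<Suc n. ext n a B $$ (i,k) * ext n b C $$ (k,j))"
    using i j by (simp add: scalar_prod_def atLeast0LessThan)
  also have "\<dots> = ext n a B $$ (i,0) * ext n b C $$ (0,j) + (\<Sum>k<n. ext n a B $$ (i,Suc k) * ext n b C $$ (Suc k,j))"
    by (rule sum.lessThan_Suc_shift)
  also have "\<dots> = ext n (a * b) (B * C) $$ (i,j)"
  proof (cases "i = 0")
    case True
    then show ?thesis using j by (cases "j = 0") (auto simp: ext_index)
  next
    case False
    then obtain i' where i': "i = Suc i'" by (cases i) auto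
    show ?thesis
    proof (cases "j = 0")
      case True
      then show ?thesis using i i' by (auto simp: ext_index)
    next
      case False
      then obtain j' where j': "j = Suc j'" by (cases j) auto
      show ?thesis using i j i' j' assms
        by (auto simp: ext_index scalar_prod_def atLeast0LessThan)
    qed
  qed
  finally show "(ext n a B * ext n b C) $$ (i,j) = ext n (a * b) (B * C) $$ (i,j)" .
qed auto

lemma madj_ext: "B \<in> carrier_mat n n \<Longrightarrow> madj (ext n c B) = ext n (cnj c) (madj B)"
  by (rule eq_matI) (auto simp: ext_index)

lemma ext_one: "ext n 1 (1\<^sub>m n) = 1\<^sub>m (Suc n)"
  by (rule eq_matI) (auto simp: ext_index)

lemma ext_diag: "ext n (f 0) (mat_diag n (\<lambda>i. f (Suc i))) = mat_diag (Suc n) f"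
  by (rule eq_matI) (auto simp: ext_index mat_diag_def gr0_conv_Suc)

lemma unitary_ext: assumes "unitary_mat n U" shows "unitary_mat (Suc n) (ext n 1 U)"
  using assms unfolding unitary_mat_def by (auto simp: madj_ext ext_mult ext_one)

lemma unitary_cancel: assumes "unitary_mat n U" "X \<in> carrier_mat n m"
  shows "U * (madj U * X) = X" "madj U * (U * X) = X"
proof -
  have U: "U \<in> carrier_mat n n" using assms by (auto simp: unitary_mat_def)
  have "U * (madj U * X) = (U * madj U) * X" using assoc_mult_mat[OF U madj_carrier[OF U] assms(2)] by simp
  then show "U * (madj U * X) = X" using assms by (simp add: unitary_mat_def)
  have "madj U * (U * X) = (madj U * U) * X" using assoc_mult_mat[OF madj_carrier[OF U] U assms(2)] by simp
  then show "madj U * (U * X) = X" using assms by (simp add: unitary_mat_def)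
qed

lemma unitary_mult: assumes "unitary_mat n U" "unitary_mat n V" shows "unitary_mat n (U * V)"
proof -
  have U: "U \<in> carrier_mat n n" and V: "V \<in> carrier_mat n n" using assms by (auto simp: unitary_mat_def)
  have "U * V * madj (U * V) = U * (V * (madj V * madj U))"
    unfolding madj_mult[OF U V] by (rule assoc_mult_mat[OF U V]) (use U V in auto)
  also have "\<dots> = 1\<^sub>m n" using unitary_cancel(1)[OF assms(2) madj_carrier[OF U]] assms(1) by (simp add: unitary_mat_def)
  finally have 1: "U * V * madj (U * V) = 1\<^sub>m n" .
  have "madj (U * V) * (U * V) = madj V * (madj U * (U * V))"
    unfolding madj_mult[OF U V] by (rule assoc_mult_mat[OF madj_carrier[OF V] madj_carrier[OF U]]) (use U V in auto)
  also have "\<dots> = 1\<^sub>m n" using unitary_cancel(2)[OF assms(1) V] assms(2) by (simp add: unitary_mat_def)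
  finally have 2: "madj (U * V) * (U * V) = 1\<^sub>m n" .
  show ?thesis using 1 2 U V by (simp add: unitary_mat_def)
qed


lemma vnorm2_zero: assumes "v \<in> carrier_vec n" "vnorm2 n v = 0" shows "v = 0\<^sub>v n"
proof (rule eq_vecI)
  fix i assume "i < dim_vec (0\<^sub>v n)"
  then have i: "i < n" by simp
  have "(cmod (v $ i))\<^sup>2 = 0"
    using assms(2) i unfolding vnorm2_def by (subst (asm) sum_nonneg_eq_0_iff) auto
  then show "v $ i = 0\<^sub>v n $ i" using i by simp
qed (use assms in auto)

lemma vnorm2_smult: "vnorm2 n (complex_of_real c \<cdot>\<^sub>v v) = c\<^sup>2 * vnorm2 n v" if "v \<in> carrier_vec n"
  using that unfolding vnorm2_def by (auto simp: sum_distrib_left norm_mult power_mult_distrib)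

declare madj_carrier[simp del]

lemma assoc5: assumes "W \<in> carrier_mat n n" "E \<in> carrier_mat n n" "D \<in> carrier_mat n n"
  "Ea \<in> carrier_mat n n" "Wa \<in> carrier_mat n n"
  shows "W * (E * D * Ea) * Wa = W * E * D * (Ea * Wa)"
proof -
  have ED: "E * D \<in> carrier_mat n n" using assms by simp
  have EDE: "E * D * Ea \<in> carrier_mat n n" using assms by simp
  have EW: "Ea * Wa \<in> carrier_mat n n" using assms by simp
  have "W * (E * D * Ea) * Wa = W * (E * D * Ea * Wa)" by (rule assoc_mult_mat[OF assms(1) EDE assms(5)])
  also have "E * D * Ea * Wa = E * D * (Ea * Wa)" by (rule assoc_mult_mat[OF ED assms(4) assms(5)])
  also have "W * (E * D * (Ea * Wa)) = W * (E * D) * (Ea * Wa)" by (rule assoc_mult_mat[OF assms(1) ED EW, symmetric])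
  also have "W * (E * D) = W * E * D" by (rule assoc_mult_mat[OF assms(1-3), symmetric])
  finally show ?thesis .
qed

lemma spectral:
  "A \<in> carrier_mat n n \<Longrightarrow> madj A = A \<Longrightarrow>
   \<exists>U lam. unitary_mat n U \<and> A = U * mat_diag n (\<lambda>i. complex_of_real (lam i)) * madj U"
proof (induction n arbitrary: A)
  case 0
  have "unitary_mat 0 (1\<^sub>m 0)" by (auto simp: unitary_mat_def)
  moreover have "A = 1\<^sub>m 0 * mat_diag 0 (\<lambda>i. complex_of_real ((\<lambda>_. 0) i)) * madj (1\<^sub>m 0)"
    using 0 by (intro eq_matI) auto
  ultimately show ?case by (intro exI[of _ "1\<^sub>m 0"] exI[of _ "\<lambda>_. 0::real"]) simp
next
  case (Suc n)
  have A: "A \<in> carrier_mat (Suc n) (Suc n)" by fact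
  obtain e where "eigenvalue A e" using spectrum_non_empty[OF A] unfolding spectrum_def by auto
  then obtain v where "eigenvector A v e" unfolding eigenvalue_def by auto
  then have v: "v \<in> carrier_vec (Suc n)" and v0: "v \<noteq> 0\<^sub>v (Suc n)" and Av: "A *\<^sub>v v = e \<cdot>\<^sub>v v"
    using A unfolding eigenvector_def by auto
  have pos: "vnorm2 (Suc n) v > 0"
    using vnorm2_zero[OF v] v0 vnorm2_nonneg[of "Suc n" v] by fastforce
  define u where "u = complex_of_real (1 / sqrt (vnorm2 (Suc n) v)) \<cdot>\<^sub>v v"
  have u: "u \<in> carrier_vec (Suc n)" using v by (simp add: u_def)
  have nu: "vnorm2 (Suc n) u = 1" unfolding u_def vnorm2_smult[OF v] using pos
    by (simp add: power_divide)
  have Au: "A *\<^sub>v u = e \<cdot>\<^sub>v u"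
    unfolding u_def mult_mat_vec[OF A v] Av by (auto simp: smult_smult_assoc mult.commute)
  obtain W where Wu: "unitary_mat (Suc n) W" and W0: "\<And>i. i < Suc n \<Longrightarrow> W $$ (i,0) = u $ i"
    using unit_unitary[OF u _ nu] by auto
  have W: "W \<in> carrier_mat (Suc n) (Suc n)" using Wu by (simp add: unitary_mat_def)
  have Wa: "madj W \<in> carrier_mat (Suc n) (Suc n)" using W by (rule madj_carrier)
  have colW: "col W 0 = u" using W0 W u by (intro eq_vecI) auto
  define A' where "A' = madj W * A * W"
  have A': "A' \<in> carrier_mat (Suc n) (Suc n)" using W Wa A by (simp add: A'_def)
  have "col A' 0 = (madj W * A) *\<^sub>v col W 0"
    unfolding A'_def by (rule col_mult2[OF mult_carrier_mat[OF Wa A] W]) simp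
  also have "\<dots> = madj W *\<^sub>v (A *\<^sub>v col W 0)"
    using Wa A W u colW by (intro assoc_mult_mat_vec) auto
  also have "\<dots> = e \<cdot>\<^sub>v (madj W *\<^sub>v col W 0)" unfolding colW Au
    using mult_mat_vec[OF madj_carrier[OF W] u] by simp
  also have "madj W *\<^sub>v col W 0 = col (madj W * W) 0"
    by (rule col_mult2[OF Wa W, symmetric]) simp
  also have "\<dots> = unit_vec (Suc n) 0" using Wu by (simp add: unitary_mat_def)
  finally have colA': "col A' 0 = e \<cdot>\<^sub>v unit_vec (Suc n) 0" .
  have A'0: "A' $$ (i,0) = (if i = 0 then e else 0)" if "i < Suc n" for i
  proof -
    have "A' $$ (i,0) = col A' 0 $ i" using A' that by simp
    then show ?thesis unfolding colA' using that by simp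
  qed
  have hA': "madj A' = A'"
  proof -
    have "madj A' = madj W * (madj A * madj (madj W))"
      unfolding A'_def madj_mult[OF mult_carrier_mat[OF Wa A] W] madj_mult[OF Wa A] ..
    then show ?thesis using Suc.prems(2) assoc_mult_mat[OF Wa A W] by (simp add: A'_def)
  qed
  have A'h: "A' $$ (j,i) = cnj (A' $$ (i,j))" if "i < Suc n" "j < Suc n" for i j
  proof -
    have "A' $$ (j,i) = madj A' $$ (j,i)" using hA' by simp
    then show ?thesis using that A' by simp
  qed
  have e_real: "cnj e = e" using A'h[of 0 0] A'0[of 0] by (metis zero_less_Suc)
  then have e_eq: "e = complex_of_real (Re e)" by (simp add: complex_eq_iff)
  define B where "B = Matrix.mat n n (\<lambda>(i,j). A' $$ (Suc i, Suc j))"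
  have B: "B \<in> carrier_mat n n" by (simp add: B_def)
  have A'ext: "A' = ext n e B"
  proof (rule eq_matI)
    fix i j assume "i < dim_row (ext n e B)" "j < dim_col (ext n e B)"
    then have i: "i < Suc n" and j: "j < Suc n" by auto
    show "A' $$ (i,j) = ext n e B $$ (i,j)"
    proof (cases "j = 0")
      case True then show ?thesis using A'0[OF i] i by (simp add: ext_index)
    next
      case False
      show ?thesis
      proof (cases "i = 0")
        case True
        then show ?thesis using False A'h[OF j i] A'0[OF j] i j by (simp add: ext_index)
      next
        case False2: False
        then show ?thesis using False i j by (auto simp: ext_index B_def gr0_conv_Suc)
      qed
    qed
  qed (use A' in auto)
  have hB: "madj B = B"
  proof (rule eq_matI)
    fix i j assume "i < dim_row B" "j < dim_col B"
    then have i: "i < n" and j: "j < n" using B by auto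
    have "madj B $$ (i,j) = cnj (A' $$ (Suc j, Suc i))" using i j B by (simp add: B_def)
    also have "\<dots> = A' $$ (Suc i, Suc j)" using A'h[of "Suc i" "Suc j"] i j by (metis Suc_less_eq complex_cnj_cnj)
    finally show "madj B $$ (i,j) = B $$ (i,j)" using i j by (simp add: B_def)
  qed (use B in auto)
  obtain U3 lam3 where U3: "unitary_mat n U3" and B_eq: "B = U3 * mat_diag n (\<lambda>i. complex_of_real (lam3 i)) * madj U3"
    using Suc.IH[OF B hB] by blast
  have U3c: "U3 \<in> carrier_mat n n" using U3 by (simp add: unitary_mat_def)
  define lam where "lam i = (if i = 0 then Re e else lam3 (i - 1))" for i
  define D3 where "D3 = mat_diag n (\<lambda>i. complex_of_real (lam3 i))"
  have D3: "D3 \<in> carrier_mat n n" by (simp add: D3_def)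
  have Dext: "ext n e D3 = mat_diag (Suc n) (\<lambda>i. complex_of_real (lam i))"
  proof -
    have "ext n e D3 = ext n ((\<lambda>i. complex_of_real (lam i)) 0) (mat_diag n (\<lambda>i. (\<lambda>i. complex_of_real (lam i)) (Suc i)))"
      using e_eq by (simp add: D3_def lam_def)
    then show ?thesis using ext_diag[of n "\<lambda>i. complex_of_real (lam i)"] by simp
  qed
  define E where "E = ext n 1 U3"
  have E: "E \<in> carrier_mat (Suc n) (Suc n)" by (simp add: E_def)
  have A'_eq: "A' = E * mat_diag (Suc n) (\<lambda>i. complex_of_real (lam i)) * madj E"
  proof -
    have "A' = ext n (1 * e * cnj 1) (U3 * D3 * madj U3)" using A'ext B_eq by (simp add: D3_def)
    also have "\<dots> = ext n 1 U3 * ext n e D3 * ext n (cnj 1) (madj U3)"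
      unfolding ext_mult[OF U3c D3] ext_mult[OF mult_carrier_mat[OF U3c D3] madj_carrier[OF U3c]] ..
    finally show ?thesis unfolding Dext E_def using U3c by (simp add: madj_ext)
  qed
  define U where "U = W * E"
  have Uu: "unitary_mat (Suc n) U" unfolding U_def E_def using unitary_mult[OF Wu unitary_ext[OF U3]] .
  have "A = W * A' * madj W"
  proof -
    have "W * A' = A * W" unfolding A'_def
      using W Wa A unitary_cancel(1)[OF Wu, of "A * W" "Suc n"] by simp
    then have "W * A' * madj W = A * (W * madj W)" using W Wa A by simp
    then show ?thesis using Wu A by (simp add: unitary_mat_def)
  qed
  also have "\<dots> = U * mat_diag (Suc n) (\<lambda>i. complex_of_real (lam i)) * madj U"
    unfolding A'_eq U_def madj_mult[OF W E]
    by (rule assoc5[OF W E mat_diag_dim madj_carrier[OF E] Wa])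
  finally show ?case using Uu by blast

qed

declare madj_carrier[simp]

lemma gibbs:
  assumes d: "d > 0" and nn: "\<And>i. i < d \<Longrightarrow> lam i \<ge> 0" and s: "(\<Sum>i<d. lam i) = 1"
  shows "(\<Sum>i<d. lam i * ln (lam i)) + ln (real d) \<ge> 0"
proof -
  have each: "lam i * ln (lam i) \<ge> lam i - 1 / real d - lam i * ln (real d)" if i: "i < d" for i
  proof (cases "lam i = 0")
    case True then show ?thesis using d by simp
  next
    case False
    then have lp: "lam i > 0" using nn[OF i] by simp
    have y: "lam i * real d > 0" using lp d by simp
    have "ln (1 / (lam i * real d)) \<le> 1 / (lam i * real d) - 1"
      by (rule ln_le_minus_one) (use y in simp)
    then have "ln (lam i * real d) \<ge> 1 - 1 / (lam i * real d)"
      using y lp d by (simp add: ln_div)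
    then have "lam i * ln (lam i * real d) \<ge> lam i * (1 - 1 / (lam i * real d))"
      using lp by (simp add: mult_left_mono)
    moreover have "lam i * (1 - 1 / (lam i * real d)) = lam i - 1 / real d"
      using lp d by (simp add: field_simps)
    moreover have "ln (lam i * real d) = ln (lam i) + ln (real d)"
      using lp d by (simp add: ln_mult)
    ultimately show ?thesis by (simp add: algebra_simps)
  qed
  have "(\<Sum>i<d. lam i * ln (lam i)) \<ge> (\<Sum>i<d. lam i - 1 / real d - lam i * ln (real d))"
    by (rule sum_mono) (use each in auto)
  also have "(\<Sum>i<d. lam i - 1 / real d - lam i * ln (real d)) = 1 - 1 - ln (real d)"
    using d s by (simp add: sum_subtractf sum_distrib_right[symmetric])
  finally show ?thesis by simp
qed

lemma madj_smult: "madj (c \<cdot>\<^sub>m A) = cnj c \<cdot>\<^sub>m madj A"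
  by (rule eq_matI) auto

lemma qform_smult: "qform n (c \<cdot>\<^sub>m A) v = c * qform n A v" if "A \<in> carrier_mat n n"
  using that unfolding qform_def by (auto simp: sum_distrib_left mult_ac intro!: sum.cong)

lemma mtrace_unitary_conj: assumes U: "unitary_mat n U" and M: "M \<in> carrier_mat n n"
  shows "mtrace (U * M * madj U) = mtrace M"
proof -
  have Uc: "U \<in> carrier_mat n n" using U by (simp add: unitary_mat_def)
  have Ua: "madj U \<in> carrier_mat n n" using Uc by (rule madj_carrier)
  have "mtrace (U * M * madj U) = mtrace (madj U * (U * M))"
    by (rule mtrace_mult_comm[OF mult_carrier_mat[OF Uc M] Ua])
  also have "madj U * (U * M) = M" by (rule unitary_cancel(2)[OF U M])
  finally show ?thesis .
qed

lemma diag_entry_conj: assumes U: "U \<in> carrier_mat n n" and Y: "Y \<in> carrier_mat n n" and i: "i < n"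
  shows "(madj U * Y * U) $$ (i,i) = qform n Y (col U i)"
proof -
  have "(madj U * Y * U) $$ (i,i) = (\<Sum>p<n. \<Sum>q<n. cnj (U $$ (p,i)) * Y $$ (p,q) * U $$ (q,i))"
    using U Y i by (simp add: scalar_prod_def atLeast0LessThan sum_distrib_left sum_distrib_right mult_ac)
      (subst sum.swap, simp)
  also have "\<dots> = qform n Y (col U i)"
    unfolding qform_def using U i by simp
  finally show ?thesis .
qed


lemma conj_cancel: assumes U: "unitary_mat n U" and D: "D \<in> carrier_mat n n"
  shows "madj U * (U * D * madj U) * U = D"
proof -
  have Uc: "U \<in> carrier_mat n n" using U by (simp add: unitary_mat_def)
  have Ua: "madj U \<in> carrier_mat n n" using Uc by (rule madj_carrier)
  have "U * D * madj U = U * (D * madj U)" by (rule assoc_mult_mat[OF Uc D Ua])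
  then have "madj U * (U * D * madj U) = D * madj U"
    using unitary_cancel(2)[OF U mult_carrier_mat[OF D Ua]] by simp
  then have "madj U * (U * D * madj U) * U = D * (madj U * U)"
    using assoc_mult_mat[OF D Ua Uc] by simp
  then show ?thesis using U D by (simp add: unitary_mat_def)
qed

lemma prod_conj: assumes U: "unitary_mat n U" and D: "D \<in> carrier_mat n n" and L: "L \<in> carrier_mat n n"
  shows "(U * D * madj U) * (U * L * madj U) = U * (D * L) * madj U"
proof -
  have Uc: "U \<in> carrier_mat n n" using U by (simp add: unitary_mat_def)
  have Ua: "madj U \<in> carrier_mat n n" using Uc by (rule madj_carrier)
  have UD: "U * D \<in> carrier_mat n n" using Uc D by simp
  have UL: "U * L * madj U \<in> carrier_mat n n" using mult_carrier_mat[OF mult_carrier_mat[OF Uc L] Ua] .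
  have 1: "(U * D * madj U) * (U * L * madj U) = (U * D) * (madj U * (U * L * madj U))"
    by (rule assoc_mult_mat[OF UD Ua UL])
  have 2: "U * L * madj U = U * (L * madj U)" by (rule assoc_mult_mat[OF Uc L Ua])
  have 3: "madj U * (U * (L * madj U)) = L * madj U" by (rule unitary_cancel(2)[OF U mult_carrier_mat[OF L Ua]])
  have 4: "(U * D) * (L * madj U) = U * (D * (L * madj U))" by (rule assoc_mult_mat[OF Uc D mult_carrier_mat[OF L Ua]])
  have 5: "D * (L * madj U) = D * L * madj U" by (rule assoc_mult_mat[OF D L Ua, symmetric])
  have 6: "U * (D * L * madj U) = U * (D * L) * madj U" by (rule assoc_mult_mat[OF Uc mult_carrier_mat[OF D L] Ua, symmetric])
  show ?thesis unfolding 1 unfolding 2 3 4 5 6 ..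
qed

lemma pd_carrier: "pd d X \<Longrightarrow> X \<in> carrier_mat d d" by (simp add: pd_def)

lemma pd_madj: "pd d X \<Longrightarrow> madj X = X"
  by (rule herm_madj[OF pd_carrier]) (auto intro: pd_herm)

lemma XX_gram: assumes X: "X \<in> carrier_mat d d" and h: "madj X = X"
  shows "X * X = Matrix.mat d d (\<lambda>(p,q). \<Sum>r<d. cnj (X $$ (r,p)) * X $$ (r,q))"
proof (rule eq_matI)
  fix p q assume pq: "p < dim_row (Matrix.mat d d (\<lambda>(p,q). \<Sum>r<d. cnj (X $$ (r,p)) * X $$ (r,q)))"
     "q < dim_col (Matrix.mat d d (\<lambda>(p,q). \<Sum>r<d. cnj (X $$ (r,p)) * X $$ (r,q)))"
  have "X $$ (p,r) = cnj (X $$ (r,p))" if "r < d" for r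
  proof -
    have "X $$ (p,r) = madj X $$ (p,r)" using h by simp
    then show ?thesis using X pq that by simp
  qed
  then show "(X * X) $$ (p,q) = Matrix.mat d d (\<lambda>(p,q). \<Sum>r<d. cnj (X $$ (r,p)) * X $$ (r,q)) $$ (p,q)"
    using X pq by (auto simp: scalar_prod_def atLeast0LessThan intro!: sum.cong)
qed (use X in auto)

lemma ent2_nonneg: assumes d: "d > 0" and pdX: "pd d X"
  shows "ent2 d X \<ge> 0"
proof -
  have X: "X \<in> carrier_mat d d" using pdX by (rule pd_carrier)
  have hX: "madj X = X" using pdX by (rule pd_madj)
  define t where "t = (\<Sum>j<d. \<Sum>k<d. (cmod (X $$ (k,j)))\<^sup>2)"
  have trXX: "mtrace (X * X) = complex_of_real t"
    using mtrace_madj_mult_self[OF X] hX by (simp add: t_def)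
  have v0: "vec d (\<lambda>i. if i = 0 then (1::complex) else 0) \<noteq> 0\<^sub>v d"
  proof
    assume "vec d (\<lambda>i. if i = 0 then (1::complex) else 0) = 0\<^sub>v d"
    then have "vec d (\<lambda>i. if i = 0 then (1::complex) else 0) $ 0 = 0\<^sub>v d $ 0" by simp
    then show False using d by simp
  qed
  have "Re (qform d X (vec d (\<lambda>i. if i = 0 then 1 else 0))) > 0"
    using pdX v0 unfolding pd_def by auto
  then have X00: "X $$ (0,0) \<noteq> 0" using qform_one[OF d, of X] by auto
  have "t \<ge> (\<Sum>k<d. (cmod (X $$ (k,0)))\<^sup>2)"
    unfolding t_def by (rule member_le_sum) (use d in \<open>auto intro: sum_nonneg\<close>)
  moreover have "(\<Sum>k<d. (cmod (X $$ (k,0)))\<^sup>2) \<ge> (cmod (X $$ (0,0)))\<^sup>2"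
    by (rule member_le_sum) (use d in auto)
  ultimately have tpos: "t > 0" using X00 by (smt (verit) zero_less_power2 norm_zero norm_eq_zero)
  define Y where "Y = (1 / mtrace (X * X)) \<cdot>\<^sub>m (X * X)"
  have Yr: "Y = complex_of_real (1 / t) \<cdot>\<^sub>m (X * X)" unfolding Y_def trXX by simp
  have Y: "Y \<in> carrier_mat d d" using X by (simp add: Y_def)
  have XXc: "X * X \<in> carrier_mat d d" using X by simp
  have hY: "madj Y = Y"
    unfolding Yr madj_smult madj_mult[OF X X] hX by simp
  have XXg: "X * X = Matrix.mat d d (\<lambda>(p,q). \<Sum>r<d. cnj (X $$ (r,p)) * X $$ (r,q))" by (rule XX_gram[OF X hX])
  have qY: "Re (qform d Y v) \<ge> 0" for v
  proof -
    have "qform d Y v = complex_of_real (1 / t) * qform d (X * X) v" unfolding Yr by (rule qform_smult[OF XXc])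
    also have "qform d (X * X) v = complex_of_real (\<Sum>r<d. (cmod (\<Sum>q<d. X $$ (r,q) * v $ q))\<^sup>2)"
      unfolding XXg by (rule qform_gram)
    finally have "qform d Y v = complex_of_real (1 / t * (\<Sum>r<d. (cmod (\<Sum>q<d. X $$ (r,q) * v $ q))\<^sup>2))" by simp
    then have "Re (qform d Y v) = 1 / t * (\<Sum>r<d. (cmod (\<Sum>q<d. X $$ (r,q) * v $ q))\<^sup>2)"
      by (simp only: Re_complex_of_real)
    moreover have "1 / t * (\<Sum>r<d. (cmod (\<Sum>q<d. X $$ (r,q) * v $ q))\<^sup>2) \<ge> 0"
      using tpos by (intro mult_nonneg_nonneg sum_nonneg) auto
    ultimately show ?thesis by simp
  qed
  obtain U0 lam0 where "unitary_mat d U0 \<and> Y = U0 * mat_diag d (\<lambda>i. complex_of_real (lam0 i)) * madj U0"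
    using spectral[OF Y hY] by blast
  then have "\<exists>B U lam. unitary_mat d U \<and> Y = U * mat_diag d (\<lambda>i. complex_of_real (lam i)) * madj U \<and>
      B = U * mat_diag d (\<lambda>i. complex_of_real (ln (lam i))) * madj U" by blast
  then have "\<exists>U lam. unitary_mat d U \<and> Y = U * mat_diag d (\<lambda>i. complex_of_real (lam i)) * madj U \<and>
      mat_log d Y = U * mat_diag d (\<lambda>i. complex_of_real (ln (lam i))) * madj U"
    unfolding mat_log_def mat_fun_def by (rule someI_ex)
  then obtain U lam where Uu: "unitary_mat d U" and Yeq: "Y = U * mat_diag d (\<lambda>i. complex_of_real (lam i)) * madj U"
    and Leq: "mat_log d Y = U * mat_diag d (\<lambda>i. complex_of_real (ln (lam i))) * madj U" by blast
  have Uc: "U \<in> carrier_mat d d" using Uu by (simp add: unitary_mat_def)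
  have Ua: "madj U \<in> carrier_mat d d" using Uc by (rule madj_carrier)
  define D where "D = mat_diag d (\<lambda>i. complex_of_real (lam i))"
  define Dl where "Dl = mat_diag d (\<lambda>i. complex_of_real (ln (lam i)))"
  have Dc: "D \<in> carrier_mat d d" "Dl \<in> carrier_mat d d" by (simp_all add: D_def Dl_def)
  have Dconj: "madj U * Y * U = D"
    unfolding Yeq D_def[symmetric] by (rule conj_cancel[OF Uu Dc(1)])
  have lam_nn: "lam i \<ge> 0" if i: "i < d" for i
  proof -
    have "complex_of_real (lam i) = D $$ (i,i)" using i by (simp add: D_def mat_diag_def)
    also have "\<dots> = qform d Y (col U i)" unfolding Dconj[symmetric] by (rule diag_entry_conj[OF Uc Y i])
    finally show ?thesis using qY[of "col U i"] by (metis Re_complex_of_real)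
  qed
  have trY: "mtrace Y = 1"
    unfolding Yr using mtrace_smult[OF XXc] trXX tpos by simp
  have "mtrace Y = mtrace D" unfolding Yeq D_def[symmetric] by (rule mtrace_unitary_conj[OF Uu Dc(1)])
  then have sum1: "(\<Sum>i<d. lam i) = 1" using trY by (simp add: D_def mtrace_diag flip: of_real_sum)
  have YL: "mtrace (Y * mat_log d Y) = complex_of_real (\<Sum>i<d. lam i * ln (lam i))"
  proof -
    have "Y * mat_log d Y = (U * D * madj U) * (U * Dl * madj U)"
      unfolding Leq Dl_def[symmetric] by (subst Yeq) (simp only: D_def)
    also have "\<dots> = U * (D * Dl) * madj U" by (rule prod_conj[OF Uu Dc])
    also have "D * Dl = mat_diag d (\<lambda>i. complex_of_real (lam i * ln (lam i)))" by (simp add: D_def Dl_def)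
    finally show ?thesis using mtrace_unitary_conj[OF Uu] by (simp add: mtrace_diag)
  qed
  have Lc: "mat_log d Y \<in> carrier_mat d d" unfolding Leq using mult_carrier_mat[OF mult_carrier_mat[OF Uc mat_diag_dim] Ua] .
  define L where "L = mat_log d Y"
  define c where "c = complex_of_real (ln (real d))"
  define tY where "tY = complex_of_real t \<cdot>\<^sub>m Y"
  have tYc: "tY \<in> carrier_mat d d" using Y by (simp add: tY_def)
  have L: "L \<in> carrier_mat d d" using Lc by (simp add: L_def)
  have XY: "X * X = tY" unfolding tY_def Yr using tpos XXc by (intro eq_matI) auto
  have e1: "tY * (L + c \<cdot>\<^sub>m 1\<^sub>m d) = tY * L + tY * (c \<cdot>\<^sub>m 1\<^sub>m d)"
    by (rule mult_add_distrib_mat[OF tYc L]) simp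
  have e2: "tY * L = complex_of_real t \<cdot>\<^sub>m (Y * L)" unfolding tY_def by (rule mult_smult_assoc_mat[OF Y L])
  have e3: "tY * (c \<cdot>\<^sub>m 1\<^sub>m d) = c \<cdot>\<^sub>m tY" using mult_smult_distrib[OF tYc, of "1\<^sub>m d" d c] tYc by simp
  have "mtrace (X * X * (L + c \<cdot>\<^sub>m 1\<^sub>m d)) = complex_of_real t * mtrace (Y * L) + c * (complex_of_real t * mtrace Y)"
    unfolding XY e1 e2 e3 using mtrace_add[of "complex_of_real t \<cdot>\<^sub>m (Y * L)" d "c \<cdot>\<^sub>m tY"] Y L tYc
      mtrace_smult[OF mult_carrier_mat[OF Y L]] mtrace_smult[OF tYc] mtrace_smult[OF Y]
    by (simp add: tY_def)
  also have "\<dots> = complex_of_real (t * ((\<Sum>i<d. lam i * ln (lam i)) + ln (real d)))"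
    using YL trY by (simp add: L_def c_def algebra_simps)
  finally have "mtrace (X * X * (mat_log d Y + complex_of_real (ln (real d)) \<cdot>\<^sub>m 1\<^sub>m d)) =
     complex_of_real (t * ((\<Sum>i<d. lam i * ln (lam i)) + ln (real d)))" unfolding L_def c_def .
  then have "ent2 d X = (1 / (2 * real d)) * (t * ((\<Sum>i<d. lam i * ln (lam i)) + ln (real d)))"
    unfolding ent2_def Y_def[symmetric] by simp
  moreover have "(\<Sum>i<d. lam i * ln (lam i)) + ln (real d) \<ge> 0"
    by (rule gibbs[OF d lam_nn sum1])
  ultimately show ?thesis using tpos by simp
qed

lemma sum_split_add: "(\<Sum>p<d + k. f p) = (\<Sum>p<d. f p) + (\<Sum>p<k. f ((d::nat) + p))"
  by (induction k) (auto simp: add.assoc)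

lemma sum_split2: "(\<Sum>p<2 * d. f p) = (\<Sum>p<d. f p) + (\<Sum>p<d. f ((d::nat) + p))"
  using sum_split_add[where d=d and k=d and f=f] by (simp add: mult_2)

lemma qform_split: "qform (2 * d) A v =
   (\<Sum>i<d. \<Sum>j<d. cnj (v $ i) * A $$ (i,j) * v $ j)
 + (\<Sum>i<d. \<Sum>j<d. cnj (v $ i) * A $$ (i,d+j) * v $ (d+j))
 + (\<Sum>i<d. \<Sum>j<d. cnj (v $ (d+i)) * A $$ (d+i,j) * v $ j)
 + (\<Sum>i<d. \<Sum>j<d. cnj (v $ (d+i)) * A $$ (d+i,d+j) * v $ (d+j))"
  unfolding qform_def sum_split2 by (simp add: sum.distrib add_ac)

lemma if01_simps:
  "x * (if P then 1 else 0) = (if P then x else (0::complex))"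
  "(if P then 1 else 0) * x = (if P then x else (0::complex))"
  "- (if P then x else 0) = (if P then - x else (0::complex))"
  "cnj (if P then x else 0) = (if P then cnj x else 0)"
  by auto

lemma sum_if_eq: "m < (d::nat) \<Longrightarrow> (\<Sum>i<d. if i = m then f i else 0) = (f m :: 'a :: comm_monoid_add)"
  by simp

lemma Re_cnj_mult_self: "Re (cnj z * z) = (cmod z)\<^sup>2"
  by (subst mult.commute, subst complex_norm_square[symmetric], simp)

lemma ampl_index: "p < k * d \<Longrightarrow> q < k * d \<Longrightarrow> ampl d k T M $$ (p,q) =
  T (Matrix.mat d d (\<lambda>(i,j). M $$ ((p div d) * d + i, (q div d) * d + j))) $$ (p mod d, q mod d)"
  by (simp add: ampl_def)

lemma kadison_trace:
  assumes qc: "quantum_channel d T" and T1: "T (1\<^sub>m d) = 1\<^sub>m d" and Y: "Y \<in> carrier_mat d d" and d: "d > 0"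
  shows "Re (mtrace (madj (T Y) * T Y)) \<le> Re (mtrace (madj Y * Y))"
proof -
  have lm: "lin_map d T" and cp: "completely_positive d T" and tp: "trace_preserving d T"
    using qc by (auto simp: quantum_channel_def)
  have Tc: "T A \<in> carrier_mat d d" if "A \<in> carrier_mat d d" for A using lm that by (auto simp: lin_map_def)
  define W where "W = Matrix.mat d (2 * d) (\<lambda>(r,q). if q < d then (if r = q then 1 else 0) else Y $$ (r, q - d))"
  define M where "M = Matrix.mat (2 * d) (2 * d) (\<lambda>(p,q). \<Sum>r<d. cnj (W $$ (r,p)) * W $$ (r,q))"
  have psdM: "psd (2 * d) M" unfolding M_def by (rule psd_gram)
  define M' where "M' = ampl d 2 T M"
  have psdM': "psd (2 * d) M'" using cp psdM unfolding completely_positive_def M'_def by blast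
  define B where "B = T Y"
  have Bc: "B \<in> carrier_mat d d" unfolding B_def by (rule Tc[OF Y])
  define C where "C = madj Y * Y"
  have Cc: "C \<in> carrier_mat d d" unfolding C_def by (rule mult_carrier_mat[OF madj_carrier[OF Y] Y])
  have Wl: "W $$ (r, q) = (if r = q then 1 else 0)" if "r < d" "q < d" for r q
    using that by (simp add: W_def)
  have Wr: "W $$ (r, d + q) = Y $$ (r, q)" if "r < d" "q < d" for r q
    using that by (simp add: W_def)
  have blk00: "Matrix.mat d d (\<lambda>(i,j). M $$ (i, j)) = 1\<^sub>m d"
  proof (rule eq_matI)
    fix i j assume "i < dim_row (1\<^sub>m d)" "j < dim_col (1\<^sub>m d)"
    then have i: "i < d" and j: "j < d" by auto
    have "M $$ (i,j) = (\<Sum>r<d. cnj (W $$ (r,i)) * W $$ (r,j))" using i j by (simp add: M_def)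
    also have "\<dots> = (\<Sum>r<d. if r = i then W $$ (r,j) else 0)" using i by (intro sum.cong refl) (simp add: Wl)
    also have "\<dots> = 1\<^sub>m d $$ (i,j)" using i j by (simp add: Wl)
    finally show "Matrix.mat d d (\<lambda>(i,j). M $$ (i, j)) $$ (i,j) = 1\<^sub>m d $$ (i,j)" using i j by simp
  qed auto
  have blk01: "Matrix.mat d d (\<lambda>(i,j). M $$ (i, d + j)) = Y"
  proof (rule eq_matI)
    fix i j assume "i < dim_row Y" "j < dim_col Y"
    then have i: "i < d" and j: "j < d" using Y by auto
    have "M $$ (i,d+j) = (\<Sum>r<d. cnj (W $$ (r,i)) * W $$ (r,d+j))" using i j by (simp add: M_def)
    also have "\<dots> = (\<Sum>r<d. if r = i then W $$ (r,d+j) else 0)" using i by (intro sum.cong refl) (simp add: Wl)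
    also have "\<dots> = Y $$ (i,j)" using i j by (simp add: Wr)
    finally show "Matrix.mat d d (\<lambda>(i,j). M $$ (i, d + j)) $$ (i,j) = Y $$ (i,j)" using i j by simp
  qed (use Y in auto)
  have blk11: "Matrix.mat d d (\<lambda>(i,j). M $$ (d + i, d + j)) = C"
  proof (rule eq_matI)
    fix i j assume "i < dim_row C" "j < dim_col C"
    then have i: "i < d" and j: "j < d" using Cc by auto
    have "M $$ (d+i,d+j) = (\<Sum>r<d. cnj (Y $$ (r,i)) * Y $$ (r,j))"
      using i j by (simp add: M_def Wr)
    also have "\<dots> = C $$ (i,j)" using i j Y by (simp add: C_def scalar_prod_def atLeast0LessThan)
    finally show "Matrix.mat d d (\<lambda>(i,j). M $$ (d + i, d + j)) $$ (i,j) = C $$ (i,j)" using i j by simp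
  qed (use Cc in auto)
  have dd: "(d + i) div d = 1" "(d + i) mod d = i" "i div d = 0" "i mod d = i" if "i < d" for i
    using that d by auto
  have M1: "M' $$ (i,j) = 1\<^sub>m d $$ (i,j)" if "i < d" "j < d" for i j
  proof -
    have "M' $$ (i,j) = T (Matrix.mat d d (\<lambda>(a,b). M $$ (a, b))) $$ (i, j)"
      unfolding M'_def using that by (subst ampl_index) (auto simp: dd)
    then show ?thesis unfolding blk00 T1 .
  qed
  have M2: "M' $$ (i,d+j) = B $$ (i,j)" if "i < d" "j < d" for i j
  proof -
    have "M' $$ (i,d+j) = T (Matrix.mat d d (\<lambda>(a,b). M $$ (a, d + b))) $$ (i, j)"
      unfolding M'_def using that by (subst ampl_index) (auto simp: dd)
    then show ?thesis unfolding blk01 B_def .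
  qed
  have M4: "M' $$ (d+i,d+j) = T C $$ (i,j)" if "i < d" "j < d" for i j
  proof -
    have "M' $$ (d+i,d+j) = T (Matrix.mat d d (\<lambda>(a,b). M $$ (d + a, d + b))) $$ (i, j)"
      unfolding M'_def using that by (subst ampl_index) (auto simp: dd)
    then show ?thesis unfolding blk11 .
  qed
  have M3: "M' $$ (d+i,j) = cnj (B $$ (j,i))" if "i < d" "j < d" for i j
    using psd_herm[OF psdM', of j "d+i"] M2[of j i] that by simp
  have key: "Re (T C $$ (m,m)) \<ge> (\<Sum>j<d. (cmod (B $$ (j,m)))\<^sup>2)" if m: "m < d" for m
  proof -
    define v where "v = vec (2 * d) (\<lambda>p. if p < d then - B $$ (p, m) else if p - d = m then 1 else 0)"
    have vl: "v $ i = - B $$ (i,m)" if "i < d" for i using that by (simp add: v_def)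
    have vr: "v $ (d + i) = (if i = m then 1 else 0)" if "i < d" for i using that by (simp add: v_def)
    have S1: "(\<Sum>i<d. \<Sum>j<d. cnj (v $ i) * M' $$ (i,j) * v $ j) = (\<Sum>i<d. cnj (B $$ (i,m)) * B $$ (i,m))"
      by (intro sum.cong refl) (simp add: vl M1 if_distrib[of "\<lambda>x. _ * x * _"] cong: if_cong)
    have S2: "(\<Sum>i<d. \<Sum>j<d. cnj (v $ i) * M' $$ (i,d+j) * v $ (d+j)) = - (\<Sum>i<d. cnj (B $$ (i,m)) * B $$ (i,m))"
    proof -
      have "(\<Sum>i<d. \<Sum>j<d. cnj (v $ i) * M' $$ (i,d+j) * v $ (d+j)) = (\<Sum>i<d. \<Sum>j<d. if j = m then - (cnj (B $$ (i,m)) * B $$ (i,j)) else 0)"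
        by (intro sum.cong refl) (simp add: vl vr M2)
      also have "\<dots> = (\<Sum>i<d. - (cnj (B $$ (i,m)) * B $$ (i,m)))" using m by simp
      finally show ?thesis by (simp add: sum_negf)
    qed
    have S3: "(\<Sum>i<d. \<Sum>j<d. cnj (v $ (d+i)) * M' $$ (d+i,j) * v $ j) = - (\<Sum>j<d. cnj (B $$ (j,m)) * B $$ (j,m))"
    proof -
      have "(\<Sum>i<d. \<Sum>j<d. cnj (v $ (d+i)) * M' $$ (d+i,j) * v $ j) = (\<Sum>i<d. if i = m then (\<Sum>j<d. - (cnj (B $$ (j,m)) * B $$ (j,m))) else 0)"
        by (intro sum.cong refl) (auto simp: vl vr M3 if01_simps intro!: sum.cong)
      also have "\<dots> = (\<Sum>j<d. - (cnj (B $$ (j,m)) * B $$ (j,m)))" using m by simp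
      finally show ?thesis by (simp add: sum_negf)
    qed
    have S4: "(\<Sum>i<d. \<Sum>j<d. cnj (v $ (d+i)) * M' $$ (d+i,d+j) * v $ (d+j)) = T C $$ (m,m)"
    proof -
      have "(\<Sum>i<d. \<Sum>j<d. cnj (v $ (d+i)) * M' $$ (d+i,d+j) * v $ (d+j)) = (\<Sum>i<d. if i = m then (\<Sum>j<d. if j = m then T C $$ (i,j) else 0) else 0)"
        by (intro sum.cong refl) (auto simp: vr M4 if01_simps intro!: sum.cong)
      also have "\<dots> = T C $$ (m,m)" by (simp only: sum_if_eq[OF m])
      finally show ?thesis .
    qed
    have "qform (2 * d) M' v = T C $$ (m,m) - (\<Sum>j<d. cnj (B $$ (j,m)) * B $$ (j,m))"
      unfolding qform_split S1 S2 S3 S4 by simp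
    moreover have "Re (qform (2 * d) M' v) \<ge> 0" using psdM' by (simp add: psd_def v_def)
    moreover have "Re (\<Sum>j<d. cnj (B $$ (j,m)) * B $$ (j,m)) = (\<Sum>j<d. (cmod (B $$ (j,m)))\<^sup>2)"
      unfolding Re_sum by (simp only: Re_cnj_mult_self)
    ultimately show ?thesis by simp
  qed
  have "Re (mtrace (madj B * B)) = (\<Sum>m<d. \<Sum>j<d. (cmod (B $$ (j,m)))\<^sup>2)"
    using mtrace_madj_mult_self[OF Bc] by simp
  also have "\<dots> \<le> (\<Sum>m<d. Re (T C $$ (m,m)))" by (rule sum_mono) (use key in auto)
  also have "\<dots> = Re (mtrace (T C))" using Tc[OF Cc] by (simp add: mtrace_def Re_sum)
  also have "mtrace (T C) = mtrace C" using tp Cc by (simp add: trace_preserving_def)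
  finally show ?thesis by (simp add: B_def C_def)
qed

lemma funpow_carrier: "lin_map d T \<Longrightarrow> A \<in> carrier_mat d d \<Longrightarrow> (T ^^ k) A \<in> carrier_mat d d"
  by (induction k) (auto simp: lin_map_def)

lemma adj_iter:
  assumes hs: "hs_adjoint d T Ts" and lm: "lin_map d T"
  shows "A \<in> carrier_mat d d \<Longrightarrow> B \<in> carrier_mat d d \<Longrightarrow>
    mtrace (madj ((Ts ^^ k) A) * B) = mtrace (madj A * (T ^^ k) B)"
proof (induction k arbitrary: B)
  case 0 then show ?case by simp
next
  case (Suc k)
  have lms: "lin_map d Ts" using hs by (simp add: hs_adjoint_def)
  have TB: "T B \<in> carrier_mat d d" using lm Suc.prems by (simp add: lin_map_def)
  have "mtrace (madj ((Ts ^^ Suc k) A) * B) = mtrace (madj (Ts ((Ts ^^ k) A)) * B)" by simp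
  also have "\<dots> = mtrace (madj ((Ts ^^ k) A) * T B)"
    using hs funpow_carrier[OF lms Suc.prems(1)] Suc.prems(2) unfolding hs_adjoint_def by blast
  also have "\<dots> = mtrace (madj A * (T ^^ k) (T B))" by (rule Suc.IH[OF Suc.prems(1) TB])
  also have "(T ^^ k) (T B) = (T ^^ Suc k) B" by (simp add: funpow_swap1)
  finally show ?case .
qed

definition NN :: "nat \<Rightarrow> (complex mat \<Rightarrow> complex mat) \<Rightarrow> nat \<Rightarrow> complex mat \<Rightarrow> real" where
  "NN d T k X = Re (mtrace (madj ((T ^^ k) X) * (T ^^ k) X))"

lemma dir_eq:
  assumes hs: "hs_adjoint d T Ts" and lm: "lin_map d T" and pdX: "pd d X"
  shows "dirichlet2 d (\<lambda>X. (Ts ^^ k) ((T ^^ k) X) - X) X = (1 / real d) * (NN d T 0 X - NN d T k X)"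
proof -
  have X: "X \<in> carrier_mat d d" using pdX by (rule pd_carrier)
  have hX: "madj X = X" using pdX by (rule pd_madj)
  have lms: "lin_map d Ts" using hs by (simp add: hs_adjoint_def)
  have TX: "(T ^^ k) X \<in> carrier_mat d d" by (rule funpow_carrier[OF lm X])
  define M where "M = (Ts ^^ k) ((T ^^ k) X)"
  have Mc: "M \<in> carrier_mat d d" unfolding M_def by (rule funpow_carrier[OF lms TX])
  have "(M - X) * X = M * X - X * X" by (rule minus_mult_distrib_mat[OF Mc X X])
  then have tr: "mtrace ((M - X) * X) = mtrace (M * X) - mtrace (X * X)"
    using mtrace_minus[OF mult_carrier_mat[OF Mc X] mult_carrier_mat[OF X X]] by simp
  have "mtrace (madj M * X) = mtrace (madj M * madj X)" using hX by simp
  also have "\<dots> = mtrace (madj (X * M))" by (simp add: madj_mult[OF X Mc])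
  also have "\<dots> = cnj (mtrace (X * M))" by (rule mtrace_madj[OF mult_carrier_mat[OF X Mc]])
  also have "mtrace (X * M) = mtrace (M * X)" by (rule mtrace_mult_comm[OF X Mc])
  finally have "Re (mtrace (M * X)) = Re (mtrace (madj M * X))" by simp
  also have "mtrace (madj M * X) = mtrace (madj ((T ^^ k) X) * (T ^^ k) X)"
    unfolding M_def by (rule adj_iter[OF hs lm TX X])
  finally have 1: "Re (mtrace (M * X)) = NN d T k X" by (simp add: NN_def)
  have 2: "Re (mtrace (X * X)) = NN d T 0 X" using hX by (simp add: NN_def)
  show ?thesis unfolding dirichlet2_def M_def[symmetric] tr using 1 2 by (simp add: algebra_simps)
qed

lemma NN_dec:
  assumes ds: "doubly_stochastic d T Ts" and X: "X \<in> carrier_mat d d" and d: "d > 0"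
  shows "NN d T (Suc k) X \<le> NN d T k X"
proof -
  have qc: "quantum_channel d T" and T1: "T (1\<^sub>m d) = 1\<^sub>m d" using ds by (auto simp: doubly_stochastic_def)
  have lm: "lin_map d T" using qc by (simp add: quantum_channel_def)
  show ?thesis unfolding NN_def using kadison_trace[OF qc T1 funpow_carrier[OF lm X] d] by simp
qed

lemma NN_le0:
  assumes ds: "doubly_stochastic d T Ts" and X: "X \<in> carrier_mat d d" and d: "d > 0"
  shows "NN d T k X \<le> NN d T 0 X"
proof (induction k)
  case (Suc k) then show ?case using NN_dec[OF ds X d, of k] by linarith
qed simp

theorem mainTheorem12:
  fixes d :: nat and T Ts :: "complex mat \<Rightarrow> complex mat"
  assumes "0 < d"
    and "doubly_stochastic d T Ts"
    and "primitive d T"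
  shows "mono (\<lambda>k::nat. alpha2 d (\<lambda>X. (Ts ^^ k) ((T ^^ k) X) - X))"
proof -
  have d: "d > 0" and ds: "doubly_stochastic d T Ts" using assms by auto
  have hs: "hs_adjoint d T Ts" and lm: "lin_map d T" using ds
    by (auto simp: doubly_stochastic_def quantum_channel_def)
  define F where "F k X = dirichlet2 d (\<lambda>X. (Ts ^^ k) ((T ^^ k) X) - X) X / ent2 d X" for k X
  define P where "P X = (pd d X \<and> ent2 d X \<noteq> 0)" for X
  have alpha: "alpha2 d (\<lambda>X. (Ts ^^ k) ((T ^^ k) X) - X) = Inf (F k ` {X. P X})" for k
    unfolding alpha2_def F_def P_def by (simp add: setcompr_eq_image)
  have entpos: "ent2 d X > 0" if "P X" for X
    using that ent2_nonneg[OF d] unfolding P_def by force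
  have Fnn: "F k X \<ge> 0" if "P X" for k X
  proof -
    have X: "X \<in> carrier_mat d d" using that unfolding P_def by (simp add: pd_carrier)
    have "dirichlet2 d (\<lambda>X. (Ts ^^ k) ((T ^^ k) X) - X) X \<ge> 0"
      using dir_eq[OF hs lm, of X k] that NN_le0[OF ds X d, of k] d unfolding P_def by simp
    then show ?thesis unfolding F_def using entpos[OF that] by simp
  qed
  have Fmono: "F k X \<le> F (Suc k) X" if "P X" for k X
  proof -
    have X: "X \<in> carrier_mat d d" using that unfolding P_def by (simp add: pd_carrier)
    have "dirichlet2 d (\<lambda>X. (Ts ^^ k) ((T ^^ k) X) - X) X \<le> dirichlet2 d (\<lambda>X. (Ts ^^ Suc k) ((T ^^ Suc k) X) - X) X"
      using dir_eq[OF hs lm, of X k] dir_eq[OF hs lm, of X "Suc k"] that NN_dec[OF ds X d, of k] d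
      unfolding P_def by (simp add: divide_right_mono)
    then show ?thesis unfolding F_def using entpos[OF that] by (simp add: divide_right_mono)
  qed
  show ?thesis
    unfolding mono_iff_le_Suc alpha
  proof
    fix k
    show "Inf (F k ` {X. P X}) \<le> Inf (F (Suc k) ` {X. P X})"
    proof (cases "{X. P X} = {}")
      case True then show ?thesis by simp
    next
      case False
      show ?thesis
      proof (rule cInf_mono)
        show "F (Suc k) ` {X. P X} \<noteq> {}" using False by simp
        show "bdd_below (F k ` {X. P X})" using Fnn by (intro bdd_belowI[of _ 0]) auto
        show "\<exists>a\<in>F k ` {X. P X}. a \<le> b" if "b \<in> F (Suc k) ` {X. P X}" for b
          using that Fmono by auto
      qed
    qed
  qed
qed

end
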